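(* For every $x\in\mathbb{R}=\mathfrak{C}(\mathbb{Q})$, $\mathrm{compress}(x)\asymp x$, where $\mathrm{compress}(x)=\lambda\varepsilon.\,\mathrm{approx}(x(\tfrac{\varepsilon}{2}),\tfrac{\varepsilon}{2})$.
   Context: $\mathbb{Q}^+$ denotes the strictly positive rationals. $\mathbb{Q}$ is a metric space with $B_\varepsilon(a,b)$ iff $|a-b|\le\varepsilon$ and equivalence being equality. $\mathbb{R}=\mathfrak{C}(\mathbb{Q})$ is the set of regular functions $x:\mathbb{Q}^+\to\mathbb{Q}$, i.e. $|x(\varepsilon_1)-x(\varepsilon_2)|\le\varepsilon_1+\varepsilon_2$ for all $\varepsilon_1,\varepsilon_2\in\mathbb{Q}^+$, with $x\asymp y$ iff $|x(\varepsilon)-y(\varepsilon)|\le 2\varepsilon$ for all $\varepsilon\in\mathbb{Q}^+$. For rationals in lowest terms, $\frac{n_1}{d_1}$ is simpler than $\frac{n_2}{d_2}$ if $|n_1|+|d_1|<|n_2|+|d_2|$; every closed rational interval contains a unique simplest rational. For $a\in\mathbb{Q}$, $\varepsilon\in\mathbb{Q}^+$, $\mathrm{approx}(a,\varepsilon)$ is the simplest rational number in $[a-\varepsilon,a+\varepsilon]$. *)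

theory Defs
  imports Main "HOL.Rat"
begin

text \<open>Regular functions Q+ -> Q (values at non-positive arguments are irrelevant).\<close>
definition regular :: "(rat \<Rightarrow> rat) \<Rightarrow> bool" where
  "regular x \<longleftrightarrow> (\<forall>e1 e2. 0 < e1 \<longrightarrow> 0 < e2 \<longrightarrow> \<bar>x e1 - x e2\<bar> \<le> e1 + e2)"

definition req :: "(rat \<Rightarrow> rat) \<Rightarrow> (rat \<Rightarrow> rat) \<Rightarrow> bool" where
  "req x y \<longleftrightarrow> (\<forall>e. 0 < e \<longrightarrow> \<bar>x e - y e\<bar> \<le> 2 * e)"

definition rat_size :: "rat \<Rightarrow> int" where
  "rat_size q = (case quotient_of q of (n, d) \<Rightarrow> \<bar>n\<bar> + \<bar>d\<bar>)"

definition simpler :: "rat \<Rightarrow> rat \<Rightarrow> bool" where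
  "simpler q r \<longleftrightarrow> rat_size q < rat_size r"

definition approx :: "rat \<Rightarrow> rat \<Rightarrow> rat" where
  "approx a e = (THE q. q \<in> {a - e .. a + e} \<and>
                   (\<forall>r \<in> {a - e .. a + e}. r \<noteq> q \<longrightarrow> simpler q r))"

definition compress :: "(rat \<Rightarrow> rat) \<Rightarrow> (rat \<Rightarrow> rat)" where
  "compress x = (\<lambda>e. approx (x (e / 2)) (e / 2))"

end

theory Submission
  imports Defs
begin

lemma div_abs_le: "(g::int) > 0 \<Longrightarrow> g dvd a \<Longrightarrow> \<bar>a div g\<bar> \<le> \<bar>a\<bar>"
proof -
  assume g: "g > 0" and d: "g dvd a"
  then obtain k where k: "a = g * k" by (auto simp: dvd_def)
  have "\<bar>a div g\<bar> = \<bar>k\<bar>" using k g by simp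
  also have "\<dots> \<le> \<bar>g * k\<bar>" using g by (simp add: abs_mult mult_le_cancel_right1 )
  finally show ?thesis using k by simp
qed

lemma size_Fract_le:
  assumes "b > 0" shows "rat_size (Fract a b) \<le> \<bar>a\<bar> + b"
proof -
  define g where "g = gcd a b"
  have g: "g > 0" using assms by (simp add: g_def)
  have "quotient_of (Fract a b) = (a div g, b div g)"
    using assms by (simp add: quotient_of_Fract normalize_def g_def Let_def)
  hence "rat_size (Fract a b) = \<bar>a div g\<bar> + \<bar>b div g\<bar>" by (simp add: rat_size_def)
  also have "\<dots> \<le> \<bar>a\<bar> + \<bar>b\<bar>"
    using div_abs_le[OF g] by (simp add: g_def add_mono)
  finally show ?thesis using assms by simp
qed

lemma size_uminus: "rat_size (- q) = rat_size q"
  by (simp add: rat_size_def rat_uminus_code split: prod.splits)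

lemma size_zero: "rat_size 0 = 1"
  by (simp add: rat_size_def rat_zero_code)

lemma size_nonzero: "q \<noteq> 0 \<Longrightarrow> rat_size q \<ge> 2"
proof -
  assume q: "q \<noteq> 0"
  obtain n d where nd: "quotient_of q = (n, d)" by (cases "quotient_of q")
  have d: "d > 0" using quotient_of_denom_pos[OF nd] .
  have "n \<noteq> 0" using quotient_of_div[OF nd] q by auto
  thus ?thesis using d nd by (simp add: rat_size_def)
qed

lemma L1: "(b::int) > 0 \<Longrightarrow> (d::int) > 0 \<Longrightarrow> (of_int a / of_int b < (of_int c / of_int d::rat)) = (a*d < c*b)"
proof -
  assume "b > 0" "d > 0"
  hence "(of_int a / of_int b < (of_int c / of_int d::rat)) = (of_int a * of_int d < (of_int c * of_int b :: rat))"
    by (simp add: field_simps) 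
  also have "\<dots> = (a*d < c*b)" by (metis of_int_less_iff of_int_mult)
  finally show ?thesis .
qed
lemma L2: "(b::int) > 0 \<Longrightarrow> (d::int) > 0 \<Longrightarrow> (of_int a / of_int b \<le> (of_int c / of_int d::rat)) = (a*d \<le> c*b)"
proof -
  assume "b > 0" "d > 0"
  hence "(of_int a / of_int b \<le> (of_int c / of_int d::rat)) = (of_int a * of_int d \<le> (of_int c * of_int b :: rat))"
    by (simp add: field_simps) 
  also have "\<dots> = (a*d \<le> c*b)" by (metis of_int_le_iff of_int_mult)
  finally show ?thesis .
qed

lemma pos_case:
  assumes "0 < q" "q < r" "rat_size q = rat_size r"
  shows "\<exists>t. q \<le> t \<and> t \<le> r \<and> rat_size t < rat_size q"
proof -
  obtain a b where ab: "quotient_of q = (a, b)" by (cases "quotient_of q")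
  obtain c d where cd: "quotient_of r = (c, d)" by (cases "quotient_of r")
  have b: "b > 0" using quotient_of_denom_pos[OF ab] .
  have d: "d > 0" using quotient_of_denom_pos[OF cd] .
  have qe: "q = of_int a / of_int b" using quotient_of_div[OF ab] .
  have re: "r = of_int c / of_int d" using quotient_of_div[OF cd] .
  have a: "a > 0" using assms(1) qe b by (simp add: zero_less_divide_iff)
  have "0 < r" using assms(1,2) by simp
  hence c: "c > 0" using re d by (simp add: zero_less_divide_iff)
  have s: "a + b = c + d" using assms(3) ab cd a b c d by (simp add: rat_size_def)
  have "of_int a / of_int b < (of_int c / of_int d :: rat)" using assms qe re by simp
  hence lt: "a * d < c * b" using L1[OF b d] by simp
  have bd: "b > d"
  proof (rule ccontr)
    assume "\<not> b > d"
    hence "b \<le> d" "a \<ge> c" using s by auto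
    hence "c * b \<le> a * d" using a c b d by (meson mult_mono less_imp_le)
    thus False using lt by simp
  qed
  define k where "k = c - a"
  have k: "k \<ge> 1" "b = d + k" using s bd unfolding k_def by auto
  have "c * b - a * d = (c - a) * (c + d)" unfolding k(2) k_def by (simp add: algebra_simps)
  hence key: "c * b - a * d = k * (a + b)" unfolding k_def s by simp
  have ab0: "0 \<le> a + b" using a b by simp
  have "1 * (a + b) \<le> k * (a + b)" by (rule mult_right_mono[OF k(1) ab0])
  hence "a + b \<le> k * (a + b)" by (simp only: mult_1_left)
  hence "c \<le> k * (a + b)" using s d by linarith
  moreover have "c * (b - 1) = c * b - c" by (simp add: right_diff_distrib)
  ultimately have le2: "a * d \<le> c * (b - 1)" using key by linarith
  define t where "t = Fract a (b - 1)"
  have b1: "b - 1 > 0" using bd d by simp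
  have te: "t = of_int a / of_int (b - 1)" by (simp add: t_def Fract_of_int_quotient)
  have "a * (b - 1) \<le> a * b" using a by (intro mult_left_mono) auto
  hence "q \<le> t" unfolding qe te using L2[OF b b1] by simp
  moreover have "t \<le> r" unfolding re te using L2[OF b1 d] le2 by simp
  moreover have "rat_size t < rat_size q"
    using size_Fract_le[OF b1, of a] ab a b by (simp add: t_def rat_size_def)
  ultimately show ?thesis by blast
qed

lemma reduce:
  assumes "q < r" "rat_size q = rat_size r"
  shows "\<exists>t. q \<le> t \<and> t \<le> r \<and> rat_size t < rat_size q"
proof (cases "0 < q")
  case True thus ?thesis using pos_case assms by blast
next
  case nq: False
  show ?thesis
  proof (cases "r < 0")
    case True
    have "\<exists>t. -r \<le> t \<and> t \<le> -q \<and> rat_size t < rat_size (-r)"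
      using pos_case[of "-r" "-q"] True assms by (simp add: size_uminus)
    then obtain t where "-r \<le> t" "t \<le> -q" "rat_size t < rat_size (-r)" by blast
    thus ?thesis using assms by (intro exI[of _ "-t"]) (auto simp: size_uminus)
  next
    case False
    have "q \<noteq> 0" using size_nonzero[of r] size_zero assms by (cases "r = 0") auto
    hence "rat_size q \<ge> 2" by (rule size_nonzero)
    thus ?thesis using nq False size_zero by (intro exI[of _ 0]) auto
  qed
qed

lemma approx_in:
  assumes "e > 0" shows "approx a e \<in> {a - e .. a + e}"
proof -
  let ?I = "{a - e .. a + e}"
  define m where "m = (LEAST k. \<exists>q\<in>?I. nat (rat_size q) = k)"
  have ex: "\<exists>q\<in>?I. nat (rat_size q) = m"
    unfolding m_def by (rule LeastI[of _ "nat (rat_size a)"]) (use assms in auto)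
  then obtain q0 where q0: "q0 \<in> ?I" "nat (rat_size q0) = m" by blast
  have nn: "\<And>q. rat_size q \<ge> 0" by (simp add: rat_size_def split: prod.splits)
  have mn: "\<And>q. q \<in> ?I \<Longrightarrow> rat_size q0 \<le> rat_size q"
  proof -
    fix q assume "q \<in> ?I"
    hence "m \<le> nat (rat_size q)" unfolding m_def by (intro Least_le) blast
    thus "rat_size q0 \<le> rat_size q" using q0 nn[of q] nn[of q0] by linarith
  qed
  have P: "q0 \<in> ?I \<and> (\<forall>r \<in> ?I. r \<noteq> q0 \<longrightarrow> simpler q0 r)"
  proof (intro conjI ballI impI)
    show "q0 \<in> ?I" by fact
    fix r assume r: "r \<in> ?I" "r \<noteq> q0"
    show "simpler q0 r" unfolding simpler_def
    proof (rule ccontr)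
      assume "\<not> rat_size q0 < rat_size r"
      hence eq: "rat_size q0 = rat_size r" using mn[OF r(1)] by simp
      show False
      proof (cases "q0 < r")
        case True
        then obtain t where t: "q0 \<le> t" "t \<le> r" "rat_size t < rat_size q0" using reduce eq by blast
        have "t \<in> ?I" using q0(1) r(1) t(1,2) by simp
        from mn[OF this] t(3) show False by simp
      next
        case False
        hence "r < q0" using r(2) by simp
        then obtain t where t: "r \<le> t" "t \<le> q0" "rat_size t < rat_size r" using reduce eq by metis
        have "t \<in> ?I" using q0(1) r(1) t(1,2) by simp
        from mn[OF this] t(3) eq show False by simp
      qed
    qed
  qed
  have "approx a e = q0" unfolding approx_def
  proof (rule the_equality)
    show "q0 \<in> ?I \<and> (\<forall>r \<in> ?I. r \<noteq> q0 \<longrightarrow> simpler q0 r)" by (rule P)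
    fix q assume Q: "q \<in> ?I \<and> (\<forall>r \<in> ?I. r \<noteq> q \<longrightarrow> simpler q r)"
    show "q = q0"
    proof (rule ccontr)
      assume "q \<noteq> q0"
      hence "simpler q0 q" "simpler q q0" using P Q by auto
      thus False unfolding simpler_def by simp
    qed
  qed
  thus ?thesis using q0(1) by (simp only:)
qed

theorem theorem37:
  fixes x :: "rat \<Rightarrow> rat"
  assumes "regular x"
  shows "req (compress x) x"
  unfolding req_def compress_def
proof (intro allI impI)
  fix e :: rat assume e: "0 < e"
  define A where "A = approx (x (e/2)) (e/2)"
  define u where "u = x (e/2)"
  define v where "v = x e"
  have e2: "0 < e/2" using e by simp
  have h1: "\<bar>u - v\<bar> \<le> e/2 + e" using assms e2 e unfolding regular_def u_def v_def by blast
  have "A \<in> {u - e/2 .. u + e/2}" unfolding A_def u_def by (rule approx_in[OF e2])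
  hence "u - e/2 \<le> A" "A \<le> u + e/2" by auto
  moreover have "u - v \<le> \<bar>u - v\<bar>" "v - u \<le> \<bar>u - v\<bar>" by (rule abs_ge_self, simp)
  moreover note h1
  ultimately have "\<bar>A - v\<bar> \<le> 2 * e" by linarith
  thus "\<bar>approx (x (e / 2)) (e / 2) - x e\<bar> \<le> 2 * e" unfolding A_def v_def .
qed

end
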